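(* Let $\mathcal{P}$ be a profile of unrooted phylogenetic trees whose display graph $G(\mathcal{P})$ is connected. Then $G(\mathcal{P})$ has a complete set of pairwise parallel nice minimal cuts if and only if it has a complete set of pairwise parallel legal minimal cuts.
   Context: A phylogenetic tree is an unrooted tree whose leaves are bijectively labeled (leaves identified with labels; internal vertices have degree at least three). A profile $\mathcal{P}=\{T_1,\dots,T_k\}$ is a finite collection of phylogenetic trees; internal vertices of distinct trees are disjoint, while leaves with the same label are the same vertex. The display graph $G(\mathcal{P})$ has vertex set $\bigcup_i V(T_i)$ and edge set $\bigcup_i E(T_i)$. An edge of an input tree is internal if both endpoints are internal (non-leaf) vertices. For a vertex $u$ of an input tree, $\mathrm{Inc}(u)$ is the set of edges of $G(\mathcal{P})$ incident with $u$. A cut of a connected graph $G$ is $F\subseteq E(G)$ with $G-F$ (same vertices, edges of $F$ removed) disconnected; minimal if no proper subset is a cut. Minimal cuts $F,F'$ are parallel if $G-F$ has at most one connected component $H$ with $E(H)\cap F'\neq\emptyset$. A cut $F$ of $G(\mathcal{P})$ is legal if for every $T\in\mathcal{P}$ there is $u\in V(T)$ with $F\cap E(T)\subseteq\mathrm{Inc}(u)$; nice if legal and every component of $G(\mathcal{P})-F$ contains at least one edge. A set $\mathcal{F}$ of cuts of $G(\mathcal{P})$ is complete if for every $T\in\mathcal{P}$ and every internal edge $e$ of $T$ there is $F\in\mathcal{F}$ with $F\cap E(T)=\{e\}$. *)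

theory Defs
  imports Main
begin

definition adj :: "'v set set \<Rightarrow> ('v \<times> 'v) set" where
  "adj E = {(u, v). {u, v} \<in> E}"

definition graph_connected :: "'v set \<Rightarrow> 'v set set \<Rightarrow> bool" where
  "graph_connected V E \<longleftrightarrow> (\<forall>u\<in>V. \<forall>v\<in>V. (u, v) \<in> (adj E)\<^sup>*)"

definition components :: "'v set \<Rightarrow> 'v set set \<Rightarrow> 'v set set" where
  "components V E = {{v \<in> V. (u, v) \<in> (adj E)\<^sup>*} | u. u \<in> V}"

definition comp_edges :: "'v set set \<Rightarrow> 'v set \<Rightarrow> 'v set set" where
  "comp_edges E C = {e \<in> E. e \<subseteq> C}"

definition is_graph :: "'v set \<Rightarrow> 'v set set \<Rightarrow> bool" where
  "is_graph V E \<longleftrightarrow> finite V \<and> E \<subseteq> {{a, b} | a b. a \<noteq> b \<and> a \<in> V \<and> b \<in> V}"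

definition degree :: "'v set set \<Rightarrow> 'v \<Rightarrow> nat" where
  "degree E v = card {e \<in> E. v \<in> e}"

definition is_tree :: "'v set \<Rightarrow> 'v set set \<Rightarrow> bool" where
  "is_tree V E \<longleftrightarrow> is_graph V E \<and> V \<noteq> {} \<and> graph_connected V E \<and>
     (\<forall>e\<in>E. \<not> graph_connected V (E - {e}))"

type_synonym 'v tree = "'v set \<times> 'v set set"

definition tverts :: "'v tree \<Rightarrow> 'v set" where "tverts T = fst T"
definition tedges :: "'v tree \<Rightarrow> 'v set set" where "tedges T = snd T"

definition leaves :: "'v tree \<Rightarrow> 'v set" where
  "leaves T = {v \<in> tverts T. degree (tedges T) v \<le> 1}"

definition internal_verts :: "'v tree \<Rightarrow> 'v set" where
  "internal_verts T = tverts T - leaves T"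

text \<open>Phylogenetic tree: leaves are the labels themselves (identified with
their labels); internal vertices have degree at least three.\<close>
definition phylo_tree :: "'v tree \<Rightarrow> bool" where
  "phylo_tree T \<longleftrightarrow> is_tree (tverts T) (tedges T) \<and>
     (\<forall>v \<in> internal_verts T. degree (tedges T) v \<ge> 3)"

text \<open>Profile: finite set of phylogenetic trees; distinct trees share only
leaves (same label = same vertex), internal vertices are disjoint.\<close>
definition profile :: "'v tree set \<Rightarrow> bool" where
  "profile P \<longleftrightarrow> finite P \<and> (\<forall>T\<in>P. phylo_tree T) \<and>
     (\<forall>T\<in>P. \<forall>T'\<in>P. T \<noteq> T' \<longrightarrow>
        tverts T \<inter> tverts T' \<subseteq> leaves T \<inter> leaves T')"

definition dverts :: "'v tree set \<Rightarrow> 'v set" where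
  "dverts P = (\<Union>T\<in>P. tverts T)"
definition dedges :: "'v tree set \<Rightarrow> 'v set set" where
  "dedges P = (\<Union>T\<in>P. tedges T)"

definition internal_edge :: "'v tree \<Rightarrow> 'v set \<Rightarrow> bool" where
  "internal_edge T e \<longleftrightarrow> e \<in> tedges T \<and> e \<inter> leaves T = {}"

definition Inc :: "'v tree set \<Rightarrow> 'v \<Rightarrow> 'v set set" where
  "Inc P u = {e \<in> dedges P. u \<in> e}"

definition is_cut :: "'v set \<Rightarrow> 'v set set \<Rightarrow> 'v set set \<Rightarrow> bool" where
  "is_cut V E F \<longleftrightarrow> F \<subseteq> E \<and> \<not> graph_connected V (E - F)"

definition minimal_cut :: "'v set \<Rightarrow> 'v set set \<Rightarrow> 'v set set \<Rightarrow> bool" where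
  "minimal_cut V E F \<longleftrightarrow> is_cut V E F \<and> (\<forall>F'. F' \<subset> F \<longrightarrow> \<not> is_cut V E F')"

definition parallel :: "'v set \<Rightarrow> 'v set set \<Rightarrow> 'v set set \<Rightarrow> 'v set set \<Rightarrow> bool" where
  "parallel V E F F' \<longleftrightarrow>
     (\<forall>C1 \<in> components V (E - F). \<forall>C2 \<in> components V (E - F).
        comp_edges (E - F) C1 \<inter> F' \<noteq> {} \<longrightarrow> comp_edges (E - F) C2 \<inter> F' \<noteq> {} \<longrightarrow> C1 = C2)"

definition legal_cut :: "'v tree set \<Rightarrow> 'v set set \<Rightarrow> bool" where
  "legal_cut P F \<longleftrightarrow> is_cut (dverts P) (dedges P) F \<and>
     (\<forall>T\<in>P. \<exists>u\<in>tverts T. F \<inter> tedges T \<subseteq> Inc P u)"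

definition nice_cut :: "'v tree set \<Rightarrow> 'v set set \<Rightarrow> bool" where
  "nice_cut P F \<longleftrightarrow> legal_cut P F \<and>
     (\<forall>C \<in> components (dverts P) (dedges P - F). comp_edges (dedges P - F) C \<noteq> {})"

definition complete_cuts :: "'v tree set \<Rightarrow> 'v set set set \<Rightarrow> bool" where
  "complete_cuts P \<F> \<longleftrightarrow> (\<forall>F\<in>\<F>. is_cut (dverts P) (dedges P) F) \<and>
     (\<forall>T\<in>P. \<forall>e. internal_edge T e \<longrightarrow> (\<exists>F\<in>\<F>. F \<inter> tedges T = {e}))"

end

theory Submission
  imports Defs
begin

lemma profile_edges:
  assumes "profile P" "T \<in> P" "e \<in> tedges T"
  shows "\<exists>a b. e = {a,b} \<and> a \<noteq> b \<and> a \<in> tverts T \<and> b \<in> tverts T"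
  using assms unfolding profile_def phylo_tree_def is_tree_def is_graph_def by blast

lemma nice_if_cover:
  assumes prof: "profile P" and leg: "legal_cut P F"
    and min: "minimal_cut (dverts P) (dedges P) F"
    and T: "T \<in> P" and ie: "internal_edge T e0" and cov: "F \<inter> tedges T = {e0}"
  shows "nice_cut P F"
  unfolding nice_cut_def
proof (intro conjI ballI)
  show "legal_cut P F" by (rule leg)
  fix C assume C: "C \<in> components (dverts P) (dedges P - F)"
  show "comp_edges (dedges P - F) C \<noteq> {}"
  proof
    assume empty: "comp_edges (dedges P - F) C = {}"
    from C obtain u where u: "u \<in> dverts P"
      and Cdef: "C = {v \<in> dverts P. (u, v) \<in> (adj (dedges P - F))\<^sup>*}"
      unfolding components_def by blast
    have Eg: "\<exists>a b. e = {a,b} \<and> a \<noteq> b \<and> a \<in> dverts P \<and> b \<in> dverts P" if "e \<in> dedges P" for e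
    proof -
      from that obtain T' where "T' \<in> P" "e \<in> tedges T'" unfolding dedges_def by blast
      from profile_edges[OF prof this] show ?thesis unfolding dverts_def using \<open>T' \<in> P\<close> by blast
    qed
    have incF: "e \<in> F" if "e \<in> dedges P" "u \<in> e" for e
    proof (rule ccontr)
      assume "e \<notin> F"
      from Eg[OF that(1)] obtain a b where ab: "e = {a,b}" "a \<in> dverts P" "b \<in> dverts P" by blast
      have "e \<subseteq> C"
      proof
        fix x assume "x \<in> e"
        show "x \<in> C"
        proof (cases "x = u")
          case True then show ?thesis using Cdef u by auto
        next
          case False
          then have "e = {u, x}" using ab \<open>x \<in> e\<close> \<open>u \<in> e\<close> by auto
          then have "(u, x) \<in> adj (dedges P - F)" unfolding adj_def using that \<open>e \<notin> F\<close> by auto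
          then show ?thesis using Cdef ab \<open>x \<in> e\<close> by auto
        qed
      qed
      then have "e \<in> comp_edges (dedges P - F) C" unfolding comp_edges_def using that \<open>e \<notin> F\<close> by auto
      then show False using empty by auto
    qed
    define F0 where "F0 = {e \<in> dedges P. u \<in> e}"
    have F0F: "F0 \<subseteq> F" using incF unfolding F0_def by auto
    have noadj: "(u, x) \<notin> adj (dedges P - F0)" for x by (auto simp: adj_def F0_def)
    have star: "x = u" if "(u, x) \<in> (adj (dedges P - F0))\<^sup>*" for x
      using that noadj by (auto elim: converse_rtranclE)
    have "\<not> graph_connected (dverts P) (dedges P - F)"
      using min unfolding minimal_cut_def is_cut_def by auto
    then obtain a b where "a \<in> dverts P" "b \<in> dverts P" "a \<noteq> b"
      unfolding graph_connected_def by fastforce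
    then obtain w where w: "w \<in> dverts P" "w \<noteq> u" by blast
    have "is_cut (dverts P) (dedges P) F0"
      unfolding is_cut_def graph_connected_def
      using w u star by (auto simp: F0_def)
    then have "F0 = F" using F0F min unfolding minimal_cut_def by blast
    moreover have "tedges T \<subseteq> dedges P" using T unfolding dedges_def by auto
    ultimately have eqT: "{e \<in> tedges T. u \<in> e} = {e0}" using cov unfolding F0_def by auto
    then have "u \<in> e0" by auto
    from ie have e0: "e0 \<in> tedges T" "e0 \<inter> leaves T = {}" unfolding internal_edge_def by auto
    from profile_edges[OF prof T e0(1)] have "u \<in> tverts T" using \<open>u \<in> e0\<close> by auto
    then have "u \<in> internal_verts T" using e0 \<open>u \<in> e0\<close> unfolding internal_verts_def by auto
    then have "degree (tedges T) u \<ge> 3" using prof T unfolding profile_def phylo_tree_def by blast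
    then show False using eqT unfolding degree_def by simp
  qed
qed

theorem lemma8:
  fixes P :: "'v tree set"
  assumes "profile P"
    and "graph_connected (dverts P) (dedges P)"
  shows "(\<exists>\<F>. complete_cuts P \<F> \<and>
            (\<forall>F\<in>\<F>. nice_cut P F \<and> minimal_cut (dverts P) (dedges P) F) \<and>
            (\<forall>F\<in>\<F>. \<forall>F'\<in>\<F>. parallel (dverts P) (dedges P) F F'))
     \<longleftrightarrow> (\<exists>\<F>. complete_cuts P \<F> \<and>
            (\<forall>F\<in>\<F>. legal_cut P F \<and> minimal_cut (dverts P) (dedges P) F) \<and>
            (\<forall>F\<in>\<F>. \<forall>F'\<in>\<F>. parallel (dverts P) (dedges P) F F'))"
proof
  assume "\<exists>\<F>. complete_cuts P \<F> \<and>
            (\<forall>F\<in>\<F>. nice_cut P F \<and> minimal_cut (dverts P) (dedges P) F) \<and>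
            (\<forall>F\<in>\<F>. \<forall>F'\<in>\<F>. parallel (dverts P) (dedges P) F F')"
  then show "\<exists>\<F>. complete_cuts P \<F> \<and>
            (\<forall>F\<in>\<F>. legal_cut P F \<and> minimal_cut (dverts P) (dedges P) F) \<and>
            (\<forall>F\<in>\<F>. \<forall>F'\<in>\<F>. parallel (dverts P) (dedges P) F F')"
    unfolding nice_cut_def by blast
next
  assume "\<exists>\<F>. complete_cuts P \<F> \<and>
            (\<forall>F\<in>\<F>. legal_cut P F \<and> minimal_cut (dverts P) (dedges P) F) \<and>
            (\<forall>F\<in>\<F>. \<forall>F'\<in>\<F>. parallel (dverts P) (dedges P) F F')"
  then obtain \<F> where cc: "complete_cuts P \<F>"
    and lm: "\<forall>F\<in>\<F>. legal_cut P F \<and> minimal_cut (dverts P) (dedges P) F"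
    and par: "\<forall>F\<in>\<F>. \<forall>F'\<in>\<F>. parallel (dverts P) (dedges P) F F'" by blast
  define \<G> where "\<G> = {F \<in> \<F>. nice_cut P F}"
  have "complete_cuts P \<G>"
    unfolding complete_cuts_def
  proof (intro conjI ballI allI impI)
    fix F assume "F \<in> \<G>" then show "is_cut (dverts P) (dedges P) F"
      using cc unfolding \<G>_def complete_cuts_def by auto
  next
    fix T e assume T: "T \<in> P" and ie: "internal_edge T e"
    then obtain F where F: "F \<in> \<F>" "F \<inter> tedges T = {e}"
      using cc unfolding complete_cuts_def by blast
    then have "nice_cut P F" using nice_if_cover[OF assms(1) _ _ T ie] lm by blast
    then show "\<exists>F\<in>\<G>. F \<inter> tedges T = {e}" using F unfolding \<G>_def by blast
  qed
  then show "\<exists>\<F>. complete_cuts P \<F> \<and>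
            (\<forall>F\<in>\<F>. nice_cut P F \<and> minimal_cut (dverts P) (dedges P) F) \<and>
            (\<forall>F\<in>\<F>. \<forall>F'\<in>\<F>. parallel (dverts P) (dedges P) F F')"
    using lm par unfolding \<G>_def by blast
qed

end
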